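(* Let $k\ge 2$, $q\in\{1,\dots,k-1\}$, $n\ge 3$ and $i\ge 1$ be integers, and let $\alpha(k)$ be the restricted period of the Fibonacci sequence modulo $k$. Consider the cylindrical Lights Out game on a board with $i$ rows and $n$ columns whose lights have $k$ states, with every light initially in the same state $k-q$. If $i\equiv 0 \pmod{\alpha(k)}$ or $i\equiv -1 \pmod{\alpha(k)}$, then the game is one-pass solvable.
   Context: Fibonacci numbers: $F_0=0$, $F_1=1$, $F_i=F_{i-1}+F_{i-2}$. The restricted period $\alpha(k)$ is the least positive integer $m$ such that $F_m\equiv 0\pmod k$. Cylindrical Lights Out game: a grid of buttons with $i$ rows (numbered $1,\dots,i$ from top to bottom) and $n$ columns, whose left and right sides are identified, so column $1$ and column $n$ are adjacent; rows do not wrap around. Each button has a light whose state is an element of $\mathbb{Z}/k\mathbb{Z}$, state $0$ meaning "off". Pressing a button once adds $1 \pmod k$ to the state of its own light and to the states of the lights orthogonally adjacent to it (above, below, left, right, where they exist, with columns taken cyclically). One-pass chasing: for $r=2,3,\dots,i$ in turn, press each button in row $r$ the number of times in $\{0,\dots,k-1\}$ needed to bring the light directly above it (in row $r-1$) to state $0$. The game is one-pass solvable if after this procedure all lights on the board are in state $0$. *)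

theory Defs
  imports "HOL-Number_Theory.Fib"
begin

definition restricted_period :: "nat \<Rightarrow> nat" where
  "restricted_period k = (LEAST m. m > 0 \<and> k dvd fib m)"

definition affects :: "nat \<Rightarrow> nat \<Rightarrow> nat \<Rightarrow> nat \<Rightarrow> nat \<Rightarrow> nat \<Rightarrow> bool" where
  "affects i n r c r' c' \<longleftrightarrow>
     r \<in> {1..i} \<and> r' \<in> {1..i} \<and> c < n \<and> c' < n \<and>
     ((r' = r \<and> c' = c) \<or>
      (c' = c \<and> (r' = r + 1 \<or> r = r' + 1)) \<or>
      (r' = r \<and> (c' = (c + 1) mod n \<or> c = (c' + 1) mod n)))"

definition apply_presses ::
  "nat \<Rightarrow> nat \<Rightarrow> nat \<Rightarrow> (nat \<Rightarrow> nat \<Rightarrow> int) \<Rightarrow> (nat \<Rightarrow> nat \<Rightarrow> int) \<Rightarrow> nat \<Rightarrow> nat \<Rightarrow> int" where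
  "apply_presses k i n P s = (\<lambda>r' c'.
     (s r' c' + (\<Sum>r\<in>{1..i}. \<Sum>c<n. if affects i n r c r' c' then P r c else 0)) mod int k)"

text \<open>Presses in row r chosen in {0..k-1} to turn off the lights in row r-1.\<close>
definition chase_row_presses ::
  "nat \<Rightarrow> nat \<Rightarrow> (nat \<Rightarrow> nat \<Rightarrow> int) \<Rightarrow> nat \<Rightarrow> nat \<Rightarrow> int" where
  "chase_row_presses k r s = (\<lambda>r'' c. if r'' = r then (- s (r - 1) c) mod int k else 0)"

text \<open>Board state after chasing rows 2, ..., m+1.\<close>
fun chase_state ::
  "nat \<Rightarrow> nat \<Rightarrow> nat \<Rightarrow> (nat \<Rightarrow> nat \<Rightarrow> int) \<Rightarrow> nat \<Rightarrow> (nat \<Rightarrow> nat \<Rightarrow> int)" where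
  "chase_state k i n s 0 = s"
| "chase_state k i n s (Suc m) =
     (let st = chase_state k i n s m in
      apply_presses k i n (chase_row_presses k (m + 2) st) st)"

definition one_pass_solvable ::
  "nat \<Rightarrow> nat \<Rightarrow> nat \<Rightarrow> (nat \<Rightarrow> nat \<Rightarrow> int) \<Rightarrow> bool" where
  "one_pass_solvable k i n s \<longleftrightarrow>
     (\<forall>r\<in>{1..i}. \<forall>c<n. chase_state k i n s (i - 1) r c = 0)"

end

theory Submission
  imports Defs "HOL-Number_Theory.Cong"
begin


lemma fib_back:
  assumes "[int (fib (Suc j)) = int (fib (Suc l))] (mod k)"
      and "[int (fib (Suc (Suc j))) = int (fib (Suc (Suc l)))] (mod k)"
  shows "[int (fib j) = int (fib l)] (mod k)"
proof -
  have "int (fib j) = int (fib (Suc (Suc j))) - int (fib (Suc j))" by simp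
  moreover have "int (fib l) = int (fib (Suc (Suc l))) - int (fib (Suc l))" by simp
  ultimately show ?thesis using assms cong_diff by metis
qed

lemma fib_back_iter:
  assumes "[int (fib j1) = int (fib j2)] (mod k)"
      and "[int (fib (Suc j1)) = int (fib (Suc j2))] (mod k)"
      and "t \<le> j1" and "j1 \<le> j2"
  shows "[int (fib (j1 - t)) = int (fib (j2 - t))] (mod k) \<and>
         [int (fib (Suc (j1 - t))) = int (fib (Suc (j2 - t)))] (mod k)"
  using assms(3)
proof (induction t)
  case 0
  then show ?case using assms by simp
next
  case (Suc t)
  then have IH: "[int (fib (j1 - t)) = int (fib (j2 - t))] (mod k)"
     "[int (fib (Suc (j1 - t))) = int (fib (Suc (j2 - t)))] (mod k)" by auto
  have e1: "j1 - t = Suc (j1 - Suc t)" "j2 - t = Suc (j2 - Suc t)" using Suc.prems assms(4) by auto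
  show ?case using fib_back[where j="j1 - Suc t" and l="j2 - Suc t" and k=k] IH unfolding e1 by auto
qed

lemma exists_period:
  fixes k :: nat assumes "k \<ge> 1"
  shows "\<exists>m>0. k dvd fib m"
proof -
  define f where "f = (\<lambda>j. (fib j mod k, fib (Suc j) mod k))"
  have sub: "f ` {..k*k} \<subseteq> {..<k} \<times> {..<k}" using assms by (auto simp: f_def)
  have "card ({..<k} \<times> {..<k}) = k*k" by (simp add: card_cartesian_product)
  hence "card (f ` {..k*k}) \<le> k*k" using sub by (metis card_mono finite_SigmaI finite_lessThan)
  hence "\<not> inj_on f {..k*k}" using card_image by fastforce
  then obtain x y where xy: "x \<le> k*k" "y \<le> k*k" "x \<noteq> y" "f x = f y" unfolding inj_on_def by auto
  obtain j1 j2 where j: "j1 < j2" "f j1 = f j2"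
    using xy by (metis linorder_neqE_nat)
  have c1: "[int (fib j1) = int (fib j2)] (mod k)" "[int (fib (Suc j1)) = int (fib (Suc j2))] (mod k)"
    using j(2) unfolding f_def by (auto simp: cong_def zmod_int[symmetric])
  from fib_back_iter[OF c1, where t=j1] j(1)
  have "[int (fib 0) = int (fib (j2 - j1))] (mod k)" by simp
  hence "k dvd fib (j2 - j1)"
    by (simp add: cong_def zmod_int[symmetric] dvd_eq_mod_eq_0)
  thus ?thesis using j(1) by (intro exI[of _ "j2 - j1"]) auto
qed

lemma alpha_dvd:
  fixes k :: nat assumes "k \<ge> 1" "restricted_period k dvd m"
  shows "k dvd fib m"
proof -
  obtain m0 where "m0 > 0" "k dvd fib m0" using exists_period assms(1) by blast
  hence h: "restricted_period k > 0 \<and> k dvd fib (restricted_period k)"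
    unfolding restricted_period_def by (metis (mono_tags, lifting) LeastI)
  have "fib (restricted_period k) dvd fib m"
    using assms(2) fib_gcd by (metis gcd_nat.absorb_iff1 gcd_nat.absorb1 dvd_refl gcd_dvd2)
  thus ?thesis using h dvd_trans by blast
qed


fun pp :: "int \<Rightarrow> nat \<Rightarrow> int" where
  "pp q 0 = 0"
| "pp q (Suc 0) = 0"
| "pp q (Suc (Suc r)) = q - pp q r - 3 * pp q (Suc r)"

lemma cassini': "(int (fib (Suc r)))^2 - int (fib (Suc r)) * int (fib r) - (int (fib r))^2 = (-1)^r"
proof (induction r)
  case 0 then show ?case by simp
next
  case (Suc r)
  have "fib (Suc (Suc r)) = fib (Suc r) + fib r" by simp
  then show ?case using Suc by (simp add: algebra_simps power2_eq_square)
qed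

lemma pp_closed: "pp q (Suc r) = (-1)^(Suc r) * int (fib r) * int (fib (Suc r)) * q"
proof -
  have "pp q (Suc r) = (-1)^(Suc r) * int (fib r) * int (fib (Suc r)) * q \<and>
        pp q (Suc (Suc r)) = (-1)^(Suc (Suc r)) * int (fib (Suc r)) * int (fib (Suc (Suc r))) * q"
  proof (induction r)
    case 0 then show ?case by simp
  next
    case (Suc r)
    define a where "a = int (fib r)"
    define b where "b = int (fib (Suc r))"
    have f2: "int (fib (Suc (Suc r))) = a + b" by (simp add: a_def b_def)
    have f3: "int (fib (Suc (Suc (Suc r)))) = a + 2*b"
      by (simp add: a_def b_def)
    have cas: "b^2 - b*a - a^2 = (-1)^r" using cassini'[of r] by (simp add: a_def b_def)
    have h1: "pp q (Suc r) = (-1)^(Suc r) * a * b * q" using Suc.IH by (simp add: a_def b_def del: pp.simps)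
    have h2: "pp q (Suc (Suc r)) = (-1)^r * b * (a+b) * q" using Suc.IH f2 by (simp add: b_def del: pp.simps)
    have "pp q (Suc (Suc (Suc r))) = q - pp q (Suc r) - 3 * pp q (Suc (Suc r))" by simp
    also have "\<dots> = (-1)^r * ((-1)^r - (-1) * a * b - 3 * b * (a+b)) * q"
      unfolding h1 h2 by (simp add: algebra_simps)
    also have "\<dots> = (-1)^r * (- (a+b)*(a+2*b)) * q"
      unfolding cas[symmetric] by (simp add: algebra_simps power2_eq_square)
    finally show ?case using h2 f2 f3 by (simp add: a_def b_def algebra_simps del: pp.simps)
  qed
  thus ?thesis by simp
qed

lemma sum_if_card: fixes n :: nat shows "(\<Sum>c<n. if Q c then (P::int) else 0) = int (card {c. c < n \<and> Q c}) * P"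
proof -
  have "(\<Sum>c\<in>{..<n} \<inter> {c. Q c}. P) = (\<Sum>c<n. if Q c then (P::int) else 0)"
    by (subst sum.inter_restrict) auto
  then have "(\<Sum>c<n. if Q c then (P::int) else 0) = (\<Sum>c\<in>{..<n} \<inter> {c. Q c}. P)" by simp
  also have "{..<n} \<inter> {c. Q c} = {c. c < n \<and> Q c}" by auto
  finally show ?thesis by simp
qed

lemma succ_iff: fixes c c' n :: nat assumes "c < n" "c' < n" "n \<ge> 3"
  shows "(c' = (c+1) mod n) \<longleftrightarrow> (c = (c'+n-1) mod n)"
proof (cases "c + 1 = n")
  case True
  then show ?thesis using assms by (cases "c' = 0") (auto simp: mod_if)
next
  case False
  then show ?thesis using assms by (cases "c' = 0") (auto simp: mod_if)
qed
lemma three: fixes c' n :: nat assumes "c' < n" "n \<ge> 3" shows "card {c', (c'+1) mod n, (c'+n-1) mod n} = 3"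
proof -
  have a: "(c'+1) mod n \<noteq> c'" using assms by (auto simp: mod_if)
  have b: "(c'+n-1) mod n \<noteq> c'" using assms by (auto simp: mod_if)
  have c: "(c'+n-1) mod n \<noteq> (c'+1) mod n" using assms by (auto simp: mod_if)
  show ?thesis using a b c by simp
qed

lemma card_same_row:
  assumes "n \<ge> 3" "c' < n" "R \<in> {1..i}"
  shows "card {c. c < n \<and> affects i n R c R c'} = 3"
proof -
  have "{c. c < n \<and> affects i n R c R c'} = {c', (c'+1) mod n, (c'+n-1) mod n}"
  proof (intro set_eqI iffI)
    fix c assume "c \<in> {c. c < n \<and> affects i n R c R c'}"
    then have "c < n" "c' = c \<or> c' = (c + 1) mod n \<or> c = (c' + 1) mod n"
      unfolding affects_def by auto
    then show "c \<in> {c', (c'+1) mod n, (c'+n-1) mod n}" using assms succ_iff[of c n c']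
      by auto
  next
    fix c assume h: "c \<in> {c', (c'+1) mod n, (c'+n-1) mod n}"
    then have cn: "c < n" using assms by auto
    then show "c \<in> {c. c < n \<and> affects i n R c R c'}" using assms h succ_iff[of c n c']
      unfolding affects_def by auto
  qed
  moreover have "card {c', (c'+1) mod n, (c'+n-1) mod n} = 3" using assms three by blast
  ultimately show ?thesis by simp
qed

lemma card_adj_row:
  assumes "c' < n" "R \<in> {1..i}" "r' \<in> {1..i}" "r' = R + 1 \<or> R = r' + 1"
  shows "card {c. c < n \<and> affects i n R c r' c'} = 1"
proof -
  have "{c. c < n \<and> affects i n R c r' c'} = {c'}"
    using assms unfolding affects_def by auto
  thus ?thesis by simp
qed

lemma card_other_row:
  assumes "\<not> (r' \<in> {1..i} \<and> (r' = R \<or> r' = R + 1 \<or> R = r' + 1))"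
  shows "{c. c < n \<and> affects i n R c r' c'} = {}"
  using assms unfolding affects_def by auto

lemma press_sum:
  fixes Q :: "nat \<Rightarrow> nat \<Rightarrow> int"
  assumes "n \<ge> 3" "R \<in> {1..i}" "c' < n"
    and QR: "\<And>c. c < n \<Longrightarrow> Q R c = P" and Q0: "\<And>r c. r \<noteq> R \<Longrightarrow> Q r c = 0"
  shows "(\<Sum>r\<in>{1..i}. \<Sum>c<n. if affects i n r c r' c' then Q r c else 0) =
    (if r' \<in> {1..i} then (if r' = R then 3*P else if r' = R+1 \<or> R = r'+1 then P else 0) else 0)"
proof -
  have "(\<Sum>r\<in>{1..i}. \<Sum>c<n. if affects i n r c r' c' then Q r c else (0::int)) =
        (\<Sum>c<n. if affects i n R c r' c' then Q R c else 0) +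
        (\<Sum>r\<in>{1..i} - {R}. \<Sum>c<n. if affects i n r c r' c' then Q r c else 0)"
    using assms(2) by (simp add: sum.remove)
  also have "(\<Sum>r\<in>{1..i} - {R}. \<Sum>c<n. if affects i n r c r' c' then Q r c else 0) = 0"
    using Q0 by (auto intro!: sum.neutral)
  also have "(\<Sum>c<n. if affects i n R c r' c' then Q R c else 0) =
             (\<Sum>c<n. if affects i n R c r' c' then P else 0)"
    using QR by (intro sum.cong) auto
  also have "\<dots> = int (card {c. c < n \<and> affects i n R c r' c'}) * P" by (rule sum_if_card)
  finally have e: "(\<Sum>r\<in>{1..i}. \<Sum>c<n. if affects i n r c r' c' then Q r c else 0) =
     int (card {c. c < n \<and> affects i n R c r' c'}) * P" by simp
  show ?thesis
  proof (cases "r' \<in> {1..i} \<and> (r' = R \<or> r' = R + 1 \<or> R = r' + 1)")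
    case True
    then show ?thesis unfolding e
      using card_same_row[OF assms(1,3,2)] card_adj_row[OF assms(3,2), of r'] by auto
  next
    case False
    then show ?thesis unfolding e card_other_row[OF False] by auto
  qed
qed



definition X :: "int \<Rightarrow> nat \<Rightarrow> nat \<Rightarrow> nat \<Rightarrow> int" where
  "X q i m r = (if 1 \<le> r \<and> r \<le> m then 0 else if r = m+1 then - pp q (m+2)
      else if r = m+2 \<and> r \<le> i then -q + pp q (m+1) else -q)"

lemma pp_add2: "pp q (m+2) = q - pp q m - 3 * pp q (m+1)"
  by (metis Suc_eq_plus1 add_2_eq_Suc' pp.simps(3))

lemma step_val:
  fixes k q :: int and i m r' :: nat
  assumes "m + 2 \<le> i"
  defines "P \<equiv> (-(X q i m (m+1) mod k)) mod k"
  shows "((X q i m r' mod k) + (if r' \<in> {1..i} then if r' = m+2 then 3*P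
           else if r' = m+2+1 \<or> m+2 = r'+1 then P else 0 else 0)) mod k
         = X q i (Suc m) r' mod k"
proof -
  have Xm1: "X q i m (m+1) = - pp q (m+2)" by (simp add: X_def)
  have P: "P mod k = pp q (m+2) mod k" unfolding P_def Xm1 by (simp add: mod_simps)
  consider "r' = 0" | "r' \<ge> 1 \<and> r' \<le> m" | "r' = m+1" | "r' = m+2" | "r' = m+3" | "r' > m+3"
    by linarith
  then show ?thesis
  proof cases
    case 1 then show ?thesis by (simp add: X_def)
  next
    case 2 then show ?thesis using assms(1) by (simp add: X_def)
  next
    case 3
    then have "X q i m r' = - pp q (m+2)" "X q i (Suc m) r' = 0" by (auto simp: X_def)
    moreover have "(- pp q (m+2) mod k + P) mod k = 0"
    proof -
      have "[- pp q (m+2) mod k + P = - pp q (m+2) + pp q (m+2)] (mod k)"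
        using P by (intro cong_add) (simp_all add: cong_def)
      thus ?thesis by (simp add: cong_def)
    qed
    ultimately show ?thesis using 3 assms(1) by simp
  next
    case 4
    then have "X q i m r' = -q + pp q (m+1)" "X q i (Suc m) r' = - pp q (Suc m + 2)"
      using assms(1) by (auto simp: X_def simp del: pp.simps)
    moreover have "pp q (Suc m + 2) = q - pp q (m+1) - 3 * pp q (m+2)"
      using pp_add2[of q "Suc m"] by (simp del: pp.simps)
    moreover have "((-q + pp q (m+1)) mod k + 3 * P) mod k = (-q + pp q (m+1) + 3 * pp q (m+2)) mod k"
    proof -
      have c1: "[P = pp q (m+2)] (mod k)" using P by (simp add: cong_def)
      have c2: "[(-q + pp q (m+1)) mod k = -q + pp q (m+1)] (mod k)" by (simp add: cong_def)
      have "[(-q + pp q (m+1)) mod k + 3 * P = -q + pp q (m+1) + 3 * pp q (m+2)] (mod k)"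
        by (intro cong_add c2 cong_mult cong_refl c1)
      thus ?thesis by (simp add: cong_def)
    qed
    ultimately have "((X q i m r' mod k) + 3 * P) mod k = X q i (Suc m) r' mod k"
      by (metis (no_types, lifting) add.commute diff_add_eq diff_diff_eq2 minus_diff_eq uminus_add_conv_diff)
    then show ?thesis using 4 assms(1) by simp
  next
    case 5
    show ?thesis
    proof (cases "m + 3 \<le> i")
      case True
      then have "X q i m r' = -q" "X q i (Suc m) r' = -q + pp q (m+2)"
        using 5 by (auto simp: X_def)
      moreover have "((-q) mod k + P) mod k = (-q + pp q (m+2)) mod k"
      proof -
        have "[(-q) mod k + P = -q + pp q (m+2)] (mod k)"
          using P by (intro cong_add) (simp_all add: cong_def del: pp.simps)
        thus ?thesis by (simp add: cong_def del: pp.simps)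
      qed
      ultimately show ?thesis using 5 True by (simp del: pp.simps)
    next
      case False
      then show ?thesis using 5 by (simp add: X_def)
    qed
  next
    case 6 then show ?thesis by (simp add: X_def)
  qed
qed


lemma neg_mod: fixes q k :: nat assumes "1 \<le> q" "q < k"
  shows "(- int q) mod int k = int k - int q"
proof -
  have "(- int q) mod int k = (int k - int q) mod int k" by (simp add: mod_simps)
  also have "\<dots> = int k - int q" using assms by (intro mod_pos_pos_trivial) auto
  finally show ?thesis .
qed

lemma invariant:
  fixes k q n i m :: nat
  assumes "1 \<le> q" "q < k" "n \<ge> 3" "m < i"
  shows "\<forall>r c. c < n \<longrightarrow> chase_state k i n (\<lambda>r c. int k - int q) m r c = X (int q) i m r mod int k"
  using assms(4)
proof (induction m)
  case 0
  have "X (int q) i 0 r = - int q" for r by (simp add: X_def)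
  then show ?case using neg_mod[OF assms(1,2)] by simp
next
  case (Suc m)
  define st where "st = chase_state k i n (\<lambda>r c. int k - int q) m"
  have IH: "\<And>r c. c < n \<Longrightarrow> st r c = X (int q) i m r mod int k"
    using Suc by (simp add: st_def)
  define P where "P = (-(X (int q) i m (m+1) mod int k)) mod int k"
  show ?case
  proof (intro allI impI)
    fix r' c' assume c': "c' < n"
    have "chase_state k i n (\<lambda>r c. int k - int q) (Suc m) r' c' =
          apply_presses k i n (chase_row_presses k (m + 2) st) st r' c'"
      by (simp add: st_def Let_def)
    also have "\<dots> = (st r' c' + (\<Sum>r\<in>{1..i}. \<Sum>c<n. if affects i n r c r' c'
                   then chase_row_presses k (m + 2) st r c else 0)) mod int k"
      unfolding apply_presses_def by (rule refl)
    also have "(\<Sum>r\<in>{1..i}. \<Sum>c<n. if affects i n r c r' c'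
                   then chase_row_presses k (m + 2) st r c else 0) =
       (if r' \<in> {1..i} then (if r' = m+2 then 3*P else if r' = m+2+1 \<or> m+2 = r'+1 then P else 0) else 0)"
    proof (rule press_sum)
      show "3 \<le> n" by fact
      show "m + 2 \<in> {1..i}" using Suc.prems by auto
      show "c' < n" by fact
      show "chase_row_presses k (m + 2) st (m + 2) c = P" if "c < n" for c
        using IH[OF that] by (simp add: chase_row_presses_def P_def)
      show "chase_row_presses k (m + 2) st r c = 0" if "r \<noteq> m + 2" for r c
        using that by (simp add: chase_row_presses_def)
    qed
    also have "st r' c' = X (int q) i m r' mod int k" using IH c' by simp
    also have "(X (int q) i m r' mod int k + (if r' \<in> {1..i} then (if r' = m+2 then 3*P
         else if r' = m+2+1 \<or> m+2 = r'+1 then P else 0) else 0)) mod int k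
         = X (int q) i (Suc m) r' mod int k"
      unfolding P_def by (rule step_val) (use Suc.prems in auto)
    finally show "chase_state k i n (\<lambda>r c. int k - int q) (Suc m) r' c' = X (int q) i (Suc m) r' mod int k" .
  qed
qed


theorem theorem3:
  fixes k q n i :: nat
  assumes "k \<ge> 2" and "q \<in> {1..k-1}" and "n \<ge> 3" and "i \<ge> 1"
    and "i mod restricted_period k = 0 \<or> (i + 1) mod restricted_period k = 0"
  shows "one_pass_solvable k i n (\<lambda>r c. int k - int q)"
proof -
  have q1: "1 \<le> q" "q < k" using assms(1,2) by auto
  have inv: "\<forall>r c. c < n \<longrightarrow> chase_state k i n (\<lambda>r c. int k - int q) (i - 1) r c
      = X (int q) i (i - 1) r mod int k"
    using invariant[OF q1 assms(3)] assms(4) by simp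
  have kd: "k dvd fib i \<or> k dvd fib (Suc i)"
    using assms(5) alpha_dvd[of k] assms(1) by (auto simp: mod_eq_0_iff_dvd)
  have "int k dvd int (fib i) * int (fib (Suc i))"
    using kd by (metis dvd_mult dvd_mult2 of_nat_dvd_iff)
  hence kp: "int k dvd pp (int q) (Suc i)" unfolding pp_closed
    by (metis dvd_mult2 dvd_mult mult.assoc)
  show ?thesis unfolding one_pass_solvable_def
  proof (intro ballI allI impI)
    fix r c assume r: "r \<in> {1..i}" and c: "c < n"
    show "chase_state k i n (\<lambda>r c. int k - int q) (i - 1) r c = 0"
    proof (cases "r \<le> i - 1")
      case True then show ?thesis using inv c r by (simp add: X_def)
    next
      case False
      then have "r = i - 1 + 1" using r by auto
      then have "X (int q) i (i - 1) r = - pp (int q) (Suc i)"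
        using assms(4) by (simp add: X_def del: pp.simps)
      then show ?thesis using inv c kp by (simp del: pp.simps)
    qed
  qed
qed

end
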